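(* Let $(C;\le_0,\le_1)$ be a compatible 2-preorder and let $\mathcal C_i$ ($i=0,1$) be the family of $\le_i$-up subsets of $C$. Then any two disjoint sets $A,B\subseteq C$ whose complements belong to $\mathcal C_1$ can be separated by a set $D\in\mathcal C_1$ whose complement is also in $\mathcal C_1$ (i.e., $A\subseteq D\subseteq C\setminus B$). If moreover $C$ is finite, then any two such disjoint sets can be separated by a set in the Boolean closure of $\mathcal C_0$ (the 2-base $(\mathcal C_0,\mathcal C_1)$ is interpolable).
   Context: A 2-preorder is a set $C$ with preorders $\le_0,\le_1$ such that $x\le_1y$ implies $x\equiv_0y$. It is compatible if $a\equiv_0b$ implies that there is $c$ with $c\le_1a$ and $c\le_1b$. A set $U$ is $\le_i$-up if $a\in U$ and $a\le_i c$ imply $c\in U$. *)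

theory Defs
  imports Main
begin

definition preorder_on_set :: "'a set \<Rightarrow> ('a \<Rightarrow> 'a \<Rightarrow> bool) \<Rightarrow> bool" where
  "preorder_on_set C r \<longleftrightarrow> (\<forall>x\<in>C. r x x) \<and>
     (\<forall>x\<in>C. \<forall>y\<in>C. \<forall>z\<in>C. r x y \<and> r y z \<longrightarrow> r x z)"

definition two_preorder :: "'a set \<Rightarrow> ('a \<Rightarrow> 'a \<Rightarrow> bool) \<Rightarrow> ('a \<Rightarrow> 'a \<Rightarrow> bool) \<Rightarrow> bool" where
  "two_preorder C le0 le1 \<longleftrightarrow> preorder_on_set C le0 \<and> preorder_on_set C le1 \<and>
     (\<forall>x\<in>C. \<forall>y\<in>C. le1 x y \<longrightarrow> le0 x y \<and> le0 y x)"

definition compatible_two_preorder :: "'a set \<Rightarrow> ('a \<Rightarrow> 'a \<Rightarrow> bool) \<Rightarrow> ('a \<Rightarrow> 'a \<Rightarrow> bool) \<Rightarrow> bool" where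
  "compatible_two_preorder C le0 le1 \<longleftrightarrow> two_preorder C le0 le1 \<and>
     (\<forall>a\<in>C. \<forall>b\<in>C. le0 a b \<and> le0 b a \<longrightarrow> (\<exists>c\<in>C. le1 c a \<and> le1 c b))"

definition up_sets :: "'a set \<Rightarrow> ('a \<Rightarrow> 'a \<Rightarrow> bool) \<Rightarrow> 'a set set" where
  "up_sets C r = {U. U \<subseteq> C \<and> (\<forall>a\<in>U. \<forall>c\<in>C. r a c \<longrightarrow> c \<in> U)}"

inductive_set bool_closure :: "'a set \<Rightarrow> 'a set set \<Rightarrow> 'a set set" for C F where
  base: "U \<in> F \<Longrightarrow> U \<in> bool_closure C F"
| empty: "{} \<in> bool_closure C F"
| compl: "U \<in> bool_closure C F \<Longrightarrow> C - U \<in> bool_closure C F"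
| union: "U \<in> bool_closure C F \<Longrightarrow> V \<in> bool_closure C F \<Longrightarrow> U \<union> V \<in> bool_closure C F"
| inter: "U \<in> bool_closure C F \<Longrightarrow> V \<in> bool_closure C F \<Longrightarrow> U \<inter> V \<in> bool_closure C F"

end

theory Submission
  imports Defs
begin

lemma bc_UN:
  assumes "finite S" "\<forall>x\<in>S. f x \<in> bool_closure C F"
  shows "(\<Union>x\<in>S. f x) \<in> bool_closure C F"
  using assms
proof (induction S rule: finite_induct)
  case empty
  then show ?case by (simp add: bool_closure.empty)
next
  case (insert x S)
  then show ?case using bool_closure.union[of "f x" C F "\<Union>x\<in>S. f x"] by simp
qed

lemma part1:
  assumes cp: "compatible_two_preorder C le0 le1"
    and AB: "A \<subseteq> C" "B \<subseteq> C" "A \<inter> B = {}"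
    and uA: "C - A \<in> up_sets C le1" and uB: "C - B \<in> up_sets C le1"
  shows "\<exists>D\<in>up_sets C le1. C - D \<in> up_sets C le1 \<and> A \<subseteq> D \<and> D \<subseteq> C - B"
proof -
  have r1: "\<And>x. x \<in> C \<Longrightarrow> le1 x x" and t1: "\<And>x y z. x \<in> C \<Longrightarrow> y \<in> C \<Longrightarrow> z \<in> C \<Longrightarrow> le1 x y \<Longrightarrow> le1 y z \<Longrightarrow> le1 x z"
    and t0: "\<And>x y z. x \<in> C \<Longrightarrow> y \<in> C \<Longrightarrow> z \<in> C \<Longrightarrow> le0 x y \<Longrightarrow> le0 y z \<Longrightarrow> le0 x z"
    and e: "\<And>x y. x \<in> C \<Longrightarrow> y \<in> C \<Longrightarrow> le1 x y \<Longrightarrow> le0 x y \<and> le0 y x"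
    and cm: "\<And>a b. a \<in> C \<Longrightarrow> b \<in> C \<Longrightarrow> le0 a b \<Longrightarrow> le0 b a \<Longrightarrow> \<exists>c\<in>C. le1 c a \<and> le1 c b"
    using cp unfolding compatible_two_preorder_def two_preorder_def preorder_on_set_def by blast+
  have dA: "\<And>x y. y \<in> A \<Longrightarrow> x \<in> C \<Longrightarrow> le1 x y \<Longrightarrow> x \<in> A"
    using uA AB unfolding up_sets_def by blast
  have dB: "\<And>x y. y \<in> B \<Longrightarrow> x \<in> C \<Longrightarrow> le1 x y \<Longrightarrow> x \<in> B"
    using uB AB unfolding up_sets_def by blast
  define D where "D = {x\<in>C. \<exists>c\<in>A. le1 c x}"
  have Dup: "\<forall>a\<in>D. \<forall>c\<in>C. le1 a c \<longrightarrow> c \<in> D"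
  proof (intro ballI impI)
    fix a c assume a: "a \<in> D" and c: "c \<in> C" "le1 a c"
    then obtain b where b: "b \<in> A" "le1 b a" "a \<in> C" unfolding D_def by blast
    have "b \<in> C" using b AB by blast
    then have "le1 b c" using t1[of b a c] b c by blast
    then show "c \<in> D" unfolding D_def using b c by blast
  qed
  have "D \<subseteq> C" unfolding D_def by blast
  then have "D \<in> up_sets C le1" using Dup unfolding up_sets_def by blast
  moreover have "C - D \<in> up_sets C le1"
    unfolding up_sets_def
  proof (intro CollectI conjI ballI impI)
    fix x y assume x: "x \<in> C - D" and y: "y \<in> C" and xy: "le1 x y"
    show "y \<in> C - D"
    proof (rule ccontr)
      assume "y \<notin> C - D"
      then obtain c where c: "c \<in> A" "le1 c y" using y D_def by blast
      have cC: "c \<in> C" using c AB by blast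
      have xC: "x \<in> C" using x by blast
      have a1: "le0 c y" "le0 y c" using e[OF cC y c(2)] by auto
      have a2: "le0 x y" "le0 y x" using e[OF xC y xy] by auto
      have "le0 c x" using t0[OF cC y xC a1(1) a2(2)] .
      moreover have "le0 x c" using t0[OF xC y cC a2(1) a1(2)] .
      ultimately have "le0 c x" "le0 x c" by auto
      then obtain f where f: "f \<in> C" "le1 f c" "le1 f x" using cm cC x by blast
      have "f \<in> A" using dA f c cC by blast
      then show False using f x D_def by blast
    qed
  qed auto
  moreover have "A \<subseteq> D" unfolding D_def using AB r1 by blast
  moreover have "D \<subseteq> C - B" unfolding D_def using dB AB by blast
  ultimately show ?thesis by blast
qed

lemma part2:
  assumes cp: "compatible_two_preorder C le0 le1" and fin: "finite C"
    and D1: "D \<in> up_sets C le1" and D2: "C - D \<in> up_sets C le1"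
  shows "D \<in> bool_closure C (up_sets C le0)"
proof -
  have r0: "\<And>x. x \<in> C \<Longrightarrow> le0 x x"
    and t0: "\<And>x y z. x \<in> C \<Longrightarrow> y \<in> C \<Longrightarrow> z \<in> C \<Longrightarrow> le0 x y \<Longrightarrow> le0 y z \<Longrightarrow> le0 x z"
    and cm: "\<And>a b. a \<in> C \<Longrightarrow> b \<in> C \<Longrightarrow> le0 a b \<Longrightarrow> le0 b a \<Longrightarrow> \<exists>c\<in>C. le1 c a \<and> le1 c b"
    using cp unfolding compatible_two_preorder_def two_preorder_def preorder_on_set_def by blast+
  have DC: "D \<subseteq> C" using D1 unfolding up_sets_def by blast
  define K where "K x = {z\<in>C. le0 x z} \<inter> (C - {z\<in>C. \<not> le0 z x})" for x
  have K: "K x \<in> bool_closure C (up_sets C le0)" if "x \<in> C" for x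
  proof -
    have "{z\<in>C. le0 x z} \<in> up_sets C le0" unfolding up_sets_def using t0 that by blast
    moreover have "{z\<in>C. \<not> le0 z x} \<in> up_sets C le0" unfolding up_sets_def using t0 that by blast
    ultimately show ?thesis unfolding K_def
      by (intro bool_closure.inter bool_closure.compl bool_closure.base)
  qed
  have cl: "z \<in> D" if xz: "x \<in> D" "z \<in> C" "le0 x z" "le0 z x" for x z
  proof -
    obtain e where e: "e \<in> C" "le1 e x" "le1 e z" using cm xz DC by blast
    have "e \<in> D"
    proof (rule ccontr)
      assume "e \<notin> D"
      then have "x \<in> C - D" using D2 e xz DC unfolding up_sets_def by blast
      then show False using xz by blast
    qed
    then show ?thesis using D1 e xz unfolding up_sets_def by blast
  qed
  have "D = (\<Union>x\<in>D. K x)"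
  proof
    show "D \<subseteq> (\<Union>x\<in>D. K x)" unfolding K_def using r0 DC by blast
    show "(\<Union>x\<in>D. K x) \<subseteq> D" unfolding K_def using cl by blast
  qed
  moreover have "finite D" using fin DC finite_subset by blast
  moreover have "\<forall>x\<in>D. K x \<in> bool_closure C (up_sets C le0)" using K DC by blast
  ultimately show ?thesis using bc_UN[of D K C "up_sets C le0"] by simp
qed

theorem lemma3p5:
  fixes C :: "'a set" and le0 le1 :: "'a \<Rightarrow> 'a \<Rightarrow> bool"
  assumes "compatible_two_preorder C le0 le1"
  shows "(\<forall>A B. A \<subseteq> C \<and> B \<subseteq> C \<and> A \<inter> B = {} \<and>
            C - A \<in> up_sets C le1 \<and> C - B \<in> up_sets C le1 \<longrightarrow>
            (\<exists>D\<in>up_sets C le1. C - D \<in> up_sets C le1 \<and> A \<subseteq> D \<and> D \<subseteq> C - B))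
       \<and> (finite C \<longrightarrow>
           (\<forall>A B. A \<subseteq> C \<and> B \<subseteq> C \<and> A \<inter> B = {} \<and>
            C - A \<in> up_sets C le1 \<and> C - B \<in> up_sets C le1 \<longrightarrow>
            (\<exists>D\<in>bool_closure C (up_sets C le0). A \<subseteq> D \<and> D \<subseteq> C - B)))"
proof (intro conjI impI allI)
  fix A B assume "A \<subseteq> C \<and> B \<subseteq> C \<and> A \<inter> B = {} \<and>
            C - A \<in> up_sets C le1 \<and> C - B \<in> up_sets C le1"
  then show "\<exists>D\<in>up_sets C le1. C - D \<in> up_sets C le1 \<and> A \<subseteq> D \<and> D \<subseteq> C - B"
    by - (elim conjE, rule part1[OF assms])
next
  fix A B assume fin: "finite C" and h: "A \<subseteq> C \<and> B \<subseteq> C \<and> A \<inter> B = {} \<and>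
            C - A \<in> up_sets C le1 \<and> C - B \<in> up_sets C le1"
  have "\<exists>D\<in>up_sets C le1. C - D \<in> up_sets C le1 \<and> A \<subseteq> D \<and> D \<subseteq> C - B"
    using h by - (elim conjE, rule part1[OF assms])
  then obtain D where "D\<in>up_sets C le1" "C - D \<in> up_sets C le1" "A \<subseteq> D" "D \<subseteq> C - B"
    by (elim bexE conjE)
  moreover have "D \<in> bool_closure C (up_sets C le0)"
    using part2[OF assms fin] calculation by simp
  ultimately show "\<exists>D\<in>bool_closure C (up_sets C le0). A \<subseteq> D \<and> D \<subseteq> C - B"
    by blast
qed

end
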